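(* Let $G=(V,E)$ be a finite, undirected, connected graph with $V=\{1,\dots,n\}$ and $n\ge 3$. Then there exists a symmetric real $n\times n$ matrix $A=(a_{ij})$ such that: (1) $A$ is positive definite; (2) $a_{ij}\neq 0$ for all $i,j$; (3) for every $i$, $|a_{ii}|<\sum_{j\neq i}|a_{ij}|$; (4) $A_G$ is positive definite; (5) $A_G$ is not strictly diagonally dominant.
   Context: For a symmetric $n\times n$ real matrix $A=(a_{ij})$, $A_G$ is defined by $(A_G)_{ij}=a_{ij}$ if $i=j$ or $(i,j)\in E$, and $(A_G)_{ij}=0$ otherwise. A matrix $M=(m_{ij})$ is strictly diagonally dominant if $|m_{ii}|>\sum_{j\neq i}|m_{ij}|$ for every $i$. *)

theory Defs
  imports "HOL-Analysis.Analysis"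
begin

definition positive_definite :: "real^'n^'n \<Rightarrow> bool" where
  "positive_definite A \<longleftrightarrow> transpose A = A \<and> (\<forall>x. x \<noteq> 0 \<longrightarrow> x \<bullet> (A *v x) > 0)"

definition graph_part :: "('n \<Rightarrow> 'n \<Rightarrow> bool) \<Rightarrow> real^'n^'n \<Rightarrow> real^'n^'n" where
  "graph_part E A = (\<chi> i j. if i = j \<or> E i j then A $ i $ j else 0)"

definition strictly_diag_dominant :: "real^'n^'n \<Rightarrow> bool" where
  "strictly_diag_dominant M \<longleftrightarrow> (\<forall>i. \<bar>M $ i $ i\<bar> > (\<Sum>j\<in>UNIV - {i}. \<bar>M $ i $ j\<bar>))"

definition undirected_graph :: "('n \<Rightarrow> 'n \<Rightarrow> bool) \<Rightarrow> bool" where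
  "undirected_graph E \<longleftrightarrow> (\<forall>u v. E u v \<longrightarrow> E v u)"

definition graph_connected :: "('n \<Rightarrow> 'n \<Rightarrow> bool) \<Rightarrow> bool" where
  "graph_connected E \<longleftrightarrow> (\<forall>u v. E\<^sup>*\<^sup>* u v)"

end

theory Submission imports Defs begin
lemma qf_expand: "x \<bullet> (M *v x) = (\<Sum>i\<in>UNIV. \<Sum>j\<in>UNIV. x$i * M$i$j * x$j)" for M :: "real^'n^'n"
  by (simp add: inner_vec_def matrix_vector_mult_def sum_distrib_left mult.assoc mult.commute mult.left_commute)

definition Amat :: "('n::finite \<Rightarrow> 'n \<Rightarrow> real) \<Rightarrow> real \<Rightarrow> real^'n^'n" where
  "Amat c d = (\<chi> i j. 1 + (if i = j then d + (\<Sum>k\<in>UNIV. if k = i then 0 else (c i k)^2) else c i j * c j i))"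

lemma Amat_qf:
  fixes x :: "real^'n::finite"
  shows "x \<bullet> (Amat c d *v x) = (\<Sum>i\<in>UNIV. x$i)^2 + d*(\<Sum>i\<in>UNIV. (x$i)^2)
     + (1/2)*(\<Sum>i\<in>UNIV. \<Sum>j\<in>UNIV. if j = i then 0 else (c i j * x$i + c j i * x$j)^2)"
proof -
  define S where "S i = (\<Sum>k\<in>UNIV. if k = i then 0 else (c i k)^2)" for i
  have e1: "x \<bullet> (Amat c d *v x) = (\<Sum>i\<in>UNIV. \<Sum>j\<in>UNIV. x$i * x$j)
     + (\<Sum>i\<in>UNIV. \<Sum>j\<in>UNIV. if i = j then x$i * x$j * (d + S i) else 0)
     + (\<Sum>i\<in>UNIV. \<Sum>j\<in>UNIV. if j = i then 0 else c i j * c j i * x$i * x$j)"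
  proof -
    have pt: "x$i * (Amat c d)$i$j * x$j = x$i * x$j + (if i = j then x$i * x$j * (d + S i) else 0)
       + (if j = i then 0 else c i j * c j i * x$i * x$j)" for i j
      unfolding Amat_def S_def by (auto simp: algebra_simps)
    show ?thesis unfolding qf_expand pt by (simp add: sum.distrib)
  qed
  have e2: "(\<Sum>i\<in>UNIV. \<Sum>j\<in>UNIV. x$i * x$j) = (\<Sum>i\<in>UNIV. x$i)^2"
    by (simp add: power2_eq_square sum_product)
  have e3: "(\<Sum>i\<in>UNIV. \<Sum>j\<in>UNIV. if i = j then x$i * x$j * (d + S i) else 0)
      = d*(\<Sum>i\<in>UNIV. (x$i)^2) + (\<Sum>i\<in>UNIV. \<Sum>j\<in>UNIV. if j = i then 0 else (c i j)^2 * (x$i)^2)"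
    by (simp add: S_def sum_distrib_left sum_distrib_right sum.distrib[symmetric] algebra_simps power2_eq_square if_distrib cong: if_cong)
  have e4: "(\<Sum>i\<in>UNIV. \<Sum>j\<in>UNIV. if j = i then 0 else (c i j * x$i + c j i * x$j)^2)
     = (\<Sum>i\<in>UNIV. \<Sum>j\<in>UNIV. if j = i then 0 else (c i j)^2 * (x$i)^2)
     + (\<Sum>i\<in>UNIV. \<Sum>j\<in>UNIV. if j = i then 0 else (c j i)^2 * (x$j)^2)
     + 2 * (\<Sum>i\<in>UNIV. \<Sum>j\<in>UNIV. if j = i then 0 else c i j * c j i * x$i * x$j)"
    by (simp add: sum_distrib_left sum.distrib[symmetric] algebra_simps power2_eq_square if_distrib cong: if_cong)
  have e5: "(\<Sum>i\<in>UNIV. \<Sum>j\<in>UNIV. if j = i then 0 else (c j i)^2 * (x$j)^2)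
     = (\<Sum>i\<in>UNIV. \<Sum>j\<in>UNIV. if j = i then 0 else (c i j)^2 * (x$i)^2)"
    by (subst sum.swap) (simp add: eq_commute)
  show ?thesis using e1 e2 e3 e4 e5 by simp
qed

lemma sum_rm: "(\<Sum>j\<in>UNIV - {i}. f j) = (\<Sum>j\<in>UNIV. if j = i then 0 else f j)" for f :: "'n::finite \<Rightarrow> real"
  by (simp add: sum.If_cases Diff_eq)

lemma G_qf:
  fixes x :: "real^'n::finite" and E :: "'n \<Rightarrow> 'n \<Rightarrow> bool"
  assumes ne: "\<And>i j. i \<noteq> j \<Longrightarrow> \<not> E i j \<Longrightarrow> c i j = 1 \<and> c j i = 1"
  shows "x \<bullet> (graph_part E (Amat c d) *v x) = (\<Sum>i\<in>UNIV. x$i)^2 + d*(\<Sum>i\<in>UNIV. (x$i)^2)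
     + (1/2)*(\<Sum>i\<in>UNIV. \<Sum>j\<in>UNIV. if j = i then 0 else if E i j then (c i j * x$i + c j i * x$j)^2 else (x$i - x$j)^2)"
proof -
  have p1: "x$i * (graph_part E (Amat c d))$i$j * x$j = x$i * (Amat c d)$i$j * x$j
      - (if i \<noteq> j \<and> \<not> E i j then 2 * x$i * x$j else 0)" for i j
    using ne[of i j] unfolding graph_part_def Amat_def by (auto simp: algebra_simps)
  have p2: "(if j = i then 0 else if E i j then (c i j * x$i + c j i * x$j)^2 else (x$i - x$j)^2)
     = (if j = i then 0 else (c i j * x$i + c j i * x$j)^2) - 2 * (if i \<noteq> j \<and> \<not> E i j then 2 * x$i * x$j else 0)" for i j
    using ne[of i j] by (auto simp: algebra_simps power2_eq_square)
  have "x \<bullet> (graph_part E (Amat c d) *v x) = x \<bullet> (Amat c d *v x)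
     - (\<Sum>i\<in>UNIV. \<Sum>j\<in>UNIV. if i \<noteq> j \<and> \<not> E i j then 2 * x$i * x$j else 0)"
    unfolding qf_expand p1 by (simp add: sum_subtractf)
  moreover have "(\<Sum>i\<in>UNIV. \<Sum>j\<in>UNIV. if j = i then 0 else if E i j then (c i j * x$i + c j i * x$j)^2 else (x$i - x$j)^2)
     = (\<Sum>i\<in>UNIV. \<Sum>j\<in>UNIV. if j = i then 0 else (c i j * x$i + c j i * x$j)^2)
     - 2 * (\<Sum>i\<in>UNIV. \<Sum>j\<in>UNIV. if i \<noteq> j \<and> \<not> E i j then 2 * x$i * x$j else 0)"
    unfolding p2 by (simp add: sum_subtractf sum_distrib_left)
  ultimately show ?thesis unfolding Amat_qf by simp
qed

lemma qf_pos_aux: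
  fixes x :: "real^'n::finite"
  assumes "x \<noteq> 0" "d > 0" "R \<ge> 0"
  shows "(\<Sum>i\<in>UNIV. x$i)^2 + d*(\<Sum>i\<in>UNIV. (x$i)^2) + (1/2) * R > 0"
proof -
  obtain i where "x$i \<noteq> 0" using assms(1) by (metis vec_eq_iff zero_index)
  then have "(\<Sum>i\<in>UNIV. (x$i)^2) > 0"
    by (intro sum_pos2) auto
  then have "d * (\<Sum>i\<in>UNIV. (x$i)^2) > 0" using assms by simp
  moreover have "(\<Sum>i\<in>UNIV. x$i)^2 \<ge> 0" by simp
  ultimately show ?thesis using assms(3) by linarith
qed


lemma exists_deg2:
  fixes E :: "'n::finite \<Rightarrow> 'n \<Rightarrow> bool"
  assumes "CARD('n) \<ge> 3" "undirected_graph E" "graph_connected E"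
  shows "\<exists>v j1 j2. j1 \<noteq> j2 \<and> j1 \<noteq> v \<and> E v j1 \<and> j2 \<noteq> v \<and> E v j2"
proof (rule ccontr)
  assume H0: "\<not> ?thesis"
  have H: "j1 = j2" if "j1 \<noteq> v" "E v j1" "j2 \<noteq> v" "E v j2" for v j1 j2
    using H0 that by blast
  have sym: "E x y \<Longrightarrow> E y x" for x y using assms(2) unfolding undirected_graph_def by blast
  obtain u :: 'n where True by blast
  define C where "C = {u} \<union> {w. w \<noteq> u \<and> E u w}"
  have c1: "card {w. w \<noteq> u \<and> E u w} \<le> 1"
  proof -
    have "card {w. w \<noteq> u \<and> E u w} \<le> Suc 0"
      by (subst card_le_Suc0_iff_eq) (auto intro: H)
    then show ?thesis by simp
  qed
  have cC: "card C \<le> 2"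
    unfolding C_def using card_Un_le[of "{u}" "{w. w \<noteq> u \<and> E u w}"] c1 by simp
  have clos: "y \<in> C" if "x \<in> C" "E x y" for x y
  proof (cases "x = u")
    case True then show ?thesis using that unfolding C_def by auto
  next
    case False
    then have xw: "x \<noteq> u" "E u x" using that unfolding C_def by auto
    show ?thesis
    proof (cases "y = x")
      case True then show ?thesis using that by simp
    next
      case False
      have "E x u" using sym xw by blast
      then have "y = u" using H[of y x u] False xw that by auto
      then show ?thesis unfolding C_def by simp
    qed
  qed
  have "z \<in> C" for z
  proof -
    have "E\<^sup>*\<^sup>* u z" using assms(3) unfolding graph_connected_def by blast
    then show ?thesis
    proof (induction rule: rtranclp_induct)
      case base then show ?case unfolding C_def by simp
    next
      case (step y z) then show ?case using clos by blast
    qed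
  qed
  then have "C = UNIV" by blast
  then show False using cC assms(1) by simp
qed


lemma sum_ind: "(\<Sum>j\<in>S. if P j then k else 0) = (k::real) * real (card {j\<in>S. P j})" if "finite S"
  using that by (simp add: sum.inter_filter[symmetric])

theorem proposition1:
  fixes E :: "'n::finite \<Rightarrow> 'n \<Rightarrow> bool"
  assumes "CARD('n) \<ge> 3"
    and "undirected_graph E"
    and "graph_connected E"
  shows "\<exists>A :: real^'n^'n.
           transpose A = A \<and>
           positive_definite A \<and>
           (\<forall>i j. A $ i $ j \<noteq> 0) \<and>
           (\<forall>i. \<bar>A $ i $ i\<bar> < (\<Sum>j\<in>UNIV - {i}. \<bar>A $ i $ j\<bar>)) \<and>
           positive_definite (graph_part E A) \<and>
           \<not> strictly_diag_dominant (graph_part E A)"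
proof -
  have sym: "E x y \<Longrightarrow> E y x" for x y using assms(2) unfolding undirected_graph_def by blast
  obtain v j1 j2 where v: "j1 \<noteq> j2" "j1 \<noteq> v" "E v j1" "j2 \<noteq> v" "E v j2"
    using exists_deg2[OF assms] by blast
  define nb where "nb j = (j \<noteq> v \<and> E v j)" for j
  define N where "N = real CARD('n)"
  have N3: "N \<ge> 3" using assms(1) unfolding N_def by simp
  define a where "a = N - 3"
  define b where "b = N - 5/2"
  have a0: "a \<ge> 0" and b0: "b \<ge> 0" using N3 unfolding a_def b_def by auto
  have ab1: "a * b - a^2 = a/2" and ab2: "a * b - b^2 = - b/2"
    unfolding a_def b_def by (simp_all add: field_simps power2_eq_square)
  define c where "c i j = (if i = v \<and> nb j then a else if j = v \<and> nb i then b else 1)" for i j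
  have c0: "c i j \<ge> 0" for i j using a0 b0 unfolding c_def by auto
  have ne: "c i j = 1 \<and> c j i = 1" if "i \<noteq> j" "\<not> E i j" for i j
    using that sym unfolding c_def nb_def by auto
  define A where "A = Amat c (1/2)"
  have Aij: "A$i$j = 1 + c i j * c j i" if "i \<noteq> j" for i j
    using that unfolding A_def Amat_def by simp
  have Aii: "A$i$i = 3/2 + (\<Sum>j\<in>UNIV - {i}. (c i j)^2)" for i
    unfolding A_def Amat_def sum_rm by simp
  have Apos: "A$i$j > 0" for i j
  proof (cases "i = j")
    case True
    have "(\<Sum>j\<in>UNIV - {i}. (c i j)^2) \<ge> 0" by (rule sum_nonneg) simp
    then show ?thesis using True Aii by simp
  next
    case False
    then show ?thesis using Aij c0 by (simp add: add_pos_nonneg)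
  qed
  have tA: "transpose A = A"
    unfolding A_def Amat_def transpose_def by (simp add: vec_eq_iff mult.commute)
  have tG: "transpose (graph_part E A) = graph_part E A"
    using tA sym unfolding graph_part_def transpose_def
    by (auto simp: vec_eq_iff)
  have pdA: "positive_definite A"
    unfolding positive_definite_def
  proof (intro conjI allI impI tA)
    fix x :: "real^'n" assume "x \<noteq> 0"
    then show "x \<bullet> (A *v x) > 0" unfolding A_def Amat_qf
      by (intro qf_pos_aux) (auto intro!: sum_nonneg)
  qed
  have pdG: "positive_definite (graph_part E A)"
    unfolding positive_definite_def
  proof (intro conjI allI impI tG)
    fix x :: "real^'n" assume "x \<noteq> 0"
    have eq: "x \<bullet> (graph_part E A *v x) = (\<Sum>i\<in>UNIV. x$i)^2 + (1/2)*(\<Sum>i\<in>UNIV. (x$i)^2)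
     + (1/2)*(\<Sum>i\<in>UNIV. \<Sum>j\<in>UNIV. if j = i then 0 else if E i j then (c i j * x$i + c j i * x$j)^2 else (x$i - x$j)^2)"
      unfolding A_def by (rule G_qf) (rule ne)
    show "x \<bullet> (graph_part E A *v x) > 0" unfolding eq using \<open>x \<noteq> 0\<close>
      by (intro qf_pos_aux) (auto intro!: sum_nonneg)
  qed
  have rows: "\<bar>A $ i $ i\<bar> < (\<Sum>j\<in>UNIV - {i}. \<bar>A $ i $ j\<bar>)" for i
  proof -
    have r1: "(\<Sum>j\<in>UNIV - {i}. \<bar>A $ i $ j\<bar>) = (\<Sum>j\<in>UNIV - {i}. 1 + c i j * c j i)"
    proof (rule sum.cong)
      fix j assume "j \<in> UNIV - {i}"
      then have "j \<noteq> i" by simp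
      then show "\<bar>A $ i $ j\<bar> = 1 + c i j * c j i" using Apos[of i j] Aij[of i j] by simp
    qed simp
    have cardi: "real (card (UNIV - {i})) = N - 1" unfolding N_def
      using assms(1) by (simp add: card_Diff_singleton of_nat_diff)
    have key: "3/2 < (\<Sum>j\<in>UNIV - {i}. 1 + c i j * c j i - (c i j)^2)"
    proof (cases "i = v")
      case True
      have "(\<Sum>j\<in>UNIV - {i}. (1::real)) \<le> (\<Sum>j\<in>UNIV - {i}. 1 + c i j * c j i - (c i j)^2)"
      proof (rule sum_mono)
        fix j assume "j \<in> UNIV - {i}"
        then show "1 \<le> 1 + c i j * c j i - (c i j)^2"
          using True ab1 a0 unfolding c_def nb_def by auto
      qed
      then show ?thesis using cardi N3 by simp
    next
      case False
      have t: "1 + c i j * c j i - (c i j)^2 = 1 + (if j = v then (if nb i then a * b - b^2 else 0) else 0)"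
        if "j \<noteq> i" for j
        using False that unfolding c_def by (auto simp: algebra_simps power2_eq_square)
      have "(\<Sum>j\<in>UNIV - {i}. 1 + c i j * c j i - (c i j)^2)
          = (\<Sum>j\<in>UNIV - {i}. 1 + (if j = v then (if nb i then a * b - b^2 else 0) else 0))"
        using t by (intro sum.cong) auto
      also have "\<dots> = (N - 1) + (if nb i then a * b - b^2 else 0)"
        using False cardi by (simp add: sum.distrib sum.delta)
      finally show ?thesis using ab2 N3 unfolding b_def by auto
    qed
    have "\<bar>A $ i $ i\<bar> = 3/2 + (\<Sum>j\<in>UNIV - {i}. (c i j)^2)"
      using Apos[of i i] Aii by simp
    then show ?thesis using key r1 by (simp add: sum_subtractf sum.distrib)
  qed
  have nsdd: "\<not> strictly_diag_dominant (graph_part E A)"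
  proof -
    define K where "K = real (card {j\<in>UNIV - {v}. nb j})"
    have "{j1, j2} \<subseteq> {j\<in>UNIV - {v}. nb j}" using v unfolding nb_def by auto
    then have "card {j1, j2} \<le> card {j\<in>UNIV - {v}. nb j}" by (intro card_mono) auto
    then have K2: "K \<ge> 2" using v(1) unfolding K_def by simp
    have cardv: "real (card (UNIV - {v})) = N - 1" unfolding N_def
      using assms(1) by (simp add: card_Diff_singleton of_nat_diff)
    have gvv: "(graph_part E A)$v$v = 3/2 + (\<Sum>j\<in>UNIV - {v}. 1 + (if nb j then a^2 - 1 else 0))"
    proof -
      have "(graph_part E A)$v$v = A$v$v" unfolding graph_part_def by simp
      also have "\<dots> = 3/2 + (\<Sum>j\<in>UNIV - {v}. (c v j)^2)" by (rule Aii)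
      also have "(\<Sum>j\<in>UNIV - {v}. (c v j)^2) = (\<Sum>j\<in>UNIV - {v}. 1 + (if nb j then a^2 - 1 else 0))"
        by (rule sum.cong) (auto simp: c_def)
      finally show ?thesis .
    qed
    have gvj: "(\<Sum>j\<in>UNIV - {v}. \<bar>(graph_part E A)$v$j\<bar>) = (\<Sum>j\<in>UNIV - {v}. if nb j then 1 + a * b else 0)"
      using a0 b0 by (intro sum.cong) (auto simp: Aij c_def nb_def graph_part_def)
    have s1: "(\<Sum>j\<in>UNIV - {v}. 1 + (if nb j then a^2 - 1 else 0)) = (N - 1) + (a^2 - 1) * K"
      unfolding K_def by (simp add: sum.distrib sum_ind cardv N_def)
    have s2: "(\<Sum>j\<in>UNIV - {v}. if nb j then 1 + a * b else 0) = (1 + a * b) * K"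
      unfolding K_def by (simp add: sum_ind)
    have "2 * (2 + a/2) \<le> K * (2 + a/2)" using K2 a0 by (intro mult_right_mono) auto
    then have "3/2 + ((N - 1) + (a^2 - 1) * K) \<le> (1 + a * b) * K"
    proof -
      have "a * b = a^2 + a/2" using ab1 by simp
      then have "(1 + a * b) * K - (a^2 - 1) * K = K * (2 + a/2)" by (simp add: algebra_simps)
      moreover have "2 * (2 + a/2) = N + 1" unfolding a_def by (simp add: field_simps)
      ultimately show ?thesis using \<open>2 * (2 + a/2) \<le> K * (2 + a/2)\<close> by linarith
    qed
    then have "\<not> \<bar>(graph_part E A)$v$v\<bar> > (\<Sum>j\<in>UNIV - {v}. \<bar>(graph_part E A)$v$j\<bar>)"
    proof -
      have "(graph_part E A)$v$v > 0" using Apos[of v v] unfolding graph_part_def by simp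
      then show ?thesis using gvv gvj s1 s2 \<open>3/2 + ((N - 1) + (a^2 - 1) * K) \<le> (1 + a * b) * K\<close> by simp
    qed
    then show ?thesis unfolding strictly_diag_dominant_def by blast
  qed
  show ?thesis using tA pdA Apos rows pdG nsdd by (intro exI[of _ A]) (auto simp: less_imp_neq[symmetric] intro: less_imp_neq)
qed

end
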